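(* Let $X$ be a collectionwise normal, first countable, strongly homogeneous topological space with $\operatorname{ind} X=0$. Then $X$ is strongly discrete homogeneous.
   Context: A Hausdorff space is strongly homogeneous if all its nonempty clopen subspaces are homeomorphic to each other. A space $X$ is collectionwise normal if it is $T_1$ and for every discrete family $\{F_s\}_{s\in S}$ of closed subsets there is a discrete family $\{V_s\}_{s\in S}$ of open sets with $F_s\subseteq V_s$. $\operatorname{ind}$ is the small inductive dimension. A subset $D$ of $X$ is discrete if each point of $X$ has a neighbourhood containing at most one point of $D$. A Hausdorff space $X$ is strongly discrete homogeneous (sDH) if for any two discrete subsets $A,B$ and any bijection $f\colon A\to B$, $f$ extends to a homeomorphism of $X$ onto itself. *)

theory Defs
  imports "HOL-Analysis.Analysis"
begin

definition discrete_family :: "'a topology \<Rightarrow> 'i set \<Rightarrow> ('i \<Rightarrow> 'a set) \<Rightarrow> bool" where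
  "discrete_family X S F \<longleftrightarrow>
     (\<forall>x\<in>topspace X. \<exists>U. openin X U \<and> x \<in> U \<and>
        (\<forall>s\<in>S. \<forall>t\<in>S. F s \<inter> U \<noteq> {} \<and> F t \<inter> U \<noteq> {} \<longrightarrow> s = t))"

text \<open>Collectionwise normal (index sets range over sets of subsets of the space, which is
  enough to index any discrete family of closed sets).\<close>
definition collectionwise_normal :: "'a topology \<Rightarrow> bool" where
  "collectionwise_normal X \<longleftrightarrow> t1_space X \<and>
     (\<forall>(S :: 'a set set) (F :: 'a set \<Rightarrow> 'a set).
        (\<forall>s\<in>S. closedin X (F s)) \<and> discrete_family X S F \<longrightarrow>
        (\<exists>V. (\<forall>s\<in>S. openin X (V s) \<and> F s \<subseteq> V s) \<and> discrete_family X S V))"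

definition strongly_homogeneous :: "'a topology \<Rightarrow> bool" where
  "strongly_homogeneous X \<longleftrightarrow> Hausdorff_space X \<and>
     (\<forall>A B. openin X A \<and> closedin X A \<and> A \<noteq> {} \<and> openin X B \<and> closedin X B \<and> B \<noteq> {}
        \<longrightarrow> subtopology X A homeomorphic_space subtopology X B)"

text \<open>ind X = 0: X is nonempty and every point has arbitrarily small open neighbourhoods
  V with ind (boundary V) = -1, i.e. with empty boundary.\<close>
definition ind_zero :: "'a topology \<Rightarrow> bool" where
  "ind_zero X \<longleftrightarrow> topspace X \<noteq> {} \<and>
     (\<forall>x U. openin X U \<and> x \<in> U \<longrightarrow>
        (\<exists>V. openin X V \<and> x \<in> V \<and> V \<subseteq> U \<and> X frontier_of V = {}))"

definition discrete_subset :: "'a topology \<Rightarrow> 'a set \<Rightarrow> bool" where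
  "discrete_subset X D \<longleftrightarrow> D \<subseteq> topspace X \<and>
     (\<forall>x\<in>topspace X. \<exists>U. openin X U \<and> x \<in> U \<and>
        (\<forall>a\<in>D \<inter> U. \<forall>b\<in>D \<inter> U. a = b))"

definition strongly_discrete_homogeneous :: "'a topology \<Rightarrow> bool" where
  "strongly_discrete_homogeneous X \<longleftrightarrow> Hausdorff_space X \<and>
     (\<forall>A B f. discrete_subset X A \<and> discrete_subset X B \<and> bij_betw f A B \<longrightarrow>
        (\<exists>h. homeomorphic_map X X h \<and> (\<forall>a\<in>A. h a = f a)))"

end

theory Submission
  imports Defs
begin

lemma glue_cont:
  assumes opn: "\<And>i. i \<in> I \<Longrightarrow> openin X (P i)"
    and dsj: "\<And>i j. i \<in> I \<Longrightarrow> j \<in> I \<Longrightarrow> i \<noteq> j \<Longrightarrow> P i \<inter> P j = {}"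
    and cov: "topspace X = (\<Union>i\<in>I. P i)"
    and cont: "\<And>i. i \<in> I \<Longrightarrow> continuous_map (subtopology X (P i)) Y (h i)"
  shows "continuous_map X Y (\<lambda>x. h (THE i. i \<in> I \<and> x \<in> P i) x)"
proof -
  have the_eq: "(THE i. i \<in> I \<and> x \<in> P i) = j" if "j \<in> I" "x \<in> P j" for x j
    by (rule the_equality) (use that dsj in blast)+
  show ?thesis
    unfolding continuous_map
  proof (intro conjI allI impI)
    show "(\<lambda>x. h (THE i. i \<in> I \<and> x \<in> P i) x) ` topspace X \<subseteq> topspace Y"
    proof clarify
      fix x assume "x \<in> topspace X"
      then obtain j where j: "j \<in> I" "x \<in> P j" using cov by auto
      then have "h j x \<in> topspace Y"
        using cont[OF j(1)] \<open>x \<in> topspace X\<close> by (auto simp: continuous_map_def)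
      then show "h (THE i. i \<in> I \<and> x \<in> P i) x \<in> topspace Y" using the_eq[OF j] by simp
    qed
  next
    fix U assume U: "openin Y U"
    show "openin X {x \<in> topspace X. h (THE i. i \<in> I \<and> x \<in> P i) x \<in> U}"
    proof (subst openin_subopen, intro ballI)
      fix x assume "x \<in> {x \<in> topspace X. h (THE i. i \<in> I \<and> x \<in> P i) x \<in> U}"
      then have x: "x \<in> topspace X" "h (THE i. i \<in> I \<and> x \<in> P i) x \<in> U" by auto
      then obtain j where j: "j \<in> I" "x \<in> P j" using cov by auto
      define T where "T = {y \<in> topspace (subtopology X (P j)). h j y \<in> U}"
      have "openin (subtopology X (P j)) T"
        using cont[OF j(1)] U unfolding T_def continuous_map by blast
      then have "openin X T" using openin_open_subtopology opn[OF j(1)] by blast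
      moreover have "x \<in> T" using x j the_eq[OF j] by (simp add: T_def)
      moreover have "T \<subseteq> {x \<in> topspace X. h (THE i. i \<in> I \<and> x \<in> P i) x \<in> U}"
        using the_eq[OF j(1)] by (auto simp: T_def)
      ultimately show "\<exists>T. openin X T \<and> x \<in> T \<and> T \<subseteq> {x \<in> topspace X. h (THE i. i \<in> I \<and> x \<in> P i) x \<in> U}"
        by blast
    qed
  qed
qed

lemma glue_homeo:
  assumes opnP: "\<And>i. i \<in> I \<Longrightarrow> openin X (P i)"
    and dsjP: "\<And>i j. i \<in> I \<Longrightarrow> j \<in> I \<Longrightarrow> i \<noteq> j \<Longrightarrow> P i \<inter> P j = {}"
    and covP: "topspace X = (\<Union>i\<in>I. P i)"
    and opnQ: "\<And>i. i \<in> I \<Longrightarrow> openin Y (Q i)"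
    and dsjQ: "\<And>i j. i \<in> I \<Longrightarrow> j \<in> I \<Longrightarrow> i \<noteq> j \<Longrightarrow> Q i \<inter> Q j = {}"
    and covQ: "topspace Y = (\<Union>i\<in>I. Q i)"
    and hm: "\<And>i. i \<in> I \<Longrightarrow> homeomorphic_maps (subtopology X (P i)) (subtopology Y (Q i)) (h i) (k i)"
  shows "homeomorphic_maps X Y (\<lambda>x. h (THE i. i \<in> I \<and> x \<in> P i) x) (\<lambda>y. k (THE i. i \<in> I \<and> y \<in> Q i) y)"
proof -
  have theP: "(THE i. i \<in> I \<and> x \<in> P i) = j" if "j \<in> I" "x \<in> P j" for x j
    by (rule the_equality) (use that dsjP in blast)+
  have theQ: "(THE i. i \<in> I \<and> x \<in> Q i) = j" if "j \<in> I" "x \<in> Q j" for x j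
    by (rule the_equality) (use that dsjQ in blast)+
  have c1: "continuous_map X Y (\<lambda>x. h (THE i. i \<in> I \<and> x \<in> P i) x)"
    by (rule glue_cont[OF opnP dsjP covP]) (use hm in \<open>auto simp: homeomorphic_maps_def continuous_map_in_subtopology\<close>)
  have c2: "continuous_map Y X (\<lambda>x. k (THE i. i \<in> I \<and> x \<in> Q i) x)"
    by (rule glue_cont[OF opnQ dsjQ covQ]) (use hm in \<open>auto simp: homeomorphic_maps_def continuous_map_in_subtopology\<close>)
  have i1: "k (THE i. i \<in> I \<and> h (THE i. i \<in> I \<and> x \<in> P i) x \<in> Q i) (h (THE i. i \<in> I \<and> x \<in> P i) x) = x"
    if xX: "x \<in> topspace X" for x
  proof -
    obtain j where j: "j \<in> I" "x \<in> P j" using covP xX by auto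
    have m: "homeomorphic_maps (subtopology X (P j)) (subtopology Y (Q j)) (h j) (k j)" using hm j(1) by blast
    have "h j x \<in> Q j" "k j (h j x) = x"
      using m xX j unfolding homeomorphic_maps_def continuous_map_def by auto
    then show ?thesis using theP[OF j] theQ[OF j(1)] by simp
  qed
  have i2: "h (THE i. i \<in> I \<and> k (THE i. i \<in> I \<and> y \<in> Q i) y \<in> P i) (k (THE i. i \<in> I \<and> y \<in> Q i) y) = y"
    if yY: "y \<in> topspace Y" for y
  proof -
    obtain j where j: "j \<in> I" "y \<in> Q j" using covQ yY by auto
    have m: "homeomorphic_maps (subtopology X (P j)) (subtopology Y (Q j)) (h j) (k j)" using hm j(1) by blast
    have "k j y \<in> P j" "h j (k j y) = y"
      using m yY j unfolding homeomorphic_maps_def continuous_map_def by auto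
    then show ?thesis using theQ[OF j] theP[OF j(1)] by simp
  qed
  show ?thesis unfolding homeomorphic_maps_def using c1 c2 i1 i2 by (intro conjI ballI) auto
qed

lemma clopen_nbhd:
  assumes "ind_zero X" "openin X U" "x \<in> U"
  shows "\<exists>V. openin X V \<and> closedin X V \<and> x \<in> V \<and> V \<subseteq> U"
proof -
  have "\<forall>x U. openin X U \<and> x \<in> U \<longrightarrow> (\<exists>V. openin X V \<and> x \<in> V \<and> V \<subseteq> U \<and> X frontier_of V = {})"
    using assms(1) unfolding ind_zero_def by (rule conjunct2)
  then have "\<exists>V. openin X V \<and> x \<in> V \<and> V \<subseteq> U \<and> X frontier_of V = {}"
    using assms(2,3) by simp
  then obtain V where V: "openin X V" "x \<in> V" "V \<subseteq> U" "X frontier_of V = {}"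
    by blast
  then have "closedin X V" using frontier_of_eq_empty[OF openin_subset[OF V(1)]] by simp
  then show ?thesis using V by blast
qed

lemma clopen_seq:
  assumes H: "Hausdorff_space X" and fc: "first_countable X" and iz: "ind_zero X"
    and noiso: "\<forall>U z. openin X U \<and> z \<in> U \<longrightarrow> (\<exists>y\<in>U. y \<noteq> z)"
    and C: "openin X C" "closedin X C" "p \<in> C"
  shows "\<exists>Cs. Cs 0 = C \<and> (\<forall>n. openin X (Cs n) \<and> closedin X (Cs n) \<and> p \<in> Cs n \<and> Cs (Suc n) \<subseteq> Cs n \<and> Cs (Suc n) \<noteq> Cs n)
     \<and> (\<forall>U. openin X U \<and> p \<in> U \<longrightarrow> (\<exists>n. Cs n \<subseteq> U))"
proof -
  have pX: "p \<in> topspace X" using C openin_subset by blast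
  obtain B where B: "countable B" "\<And>V. V \<in> B \<Longrightarrow> openin X V"
    "\<And>U. openin X U \<Longrightarrow> p \<in> U \<Longrightarrow> \<exists>V\<in>B. p \<in> V \<and> V \<subseteq> U"
    using fc pX unfolding first_countable_def by metis
  have Bne: "B \<noteq> {}" using B(3)[of "topspace X"] pX by auto
  define b where "b = from_nat_into B"
  have bB: "b n \<in> B" for n using from_nat_into[OF Bne] b_def by simp
  have rb: "range b = B" using range_from_nat_into[OF Bne B(1)] b_def by simp
  have t1: "t1_space X" using H Hausdorff_imp_t1_space by blast
  define PP where "PP = (\<lambda>(n::nat) K. openin X K \<and> closedin X K \<and> p \<in> K \<and> (n = 0 \<longrightarrow> K = C))"
  define QQ where "QQ = (\<lambda>(n::nat) K K'. K' \<subseteq> K \<and> K' \<noteq> K \<and> (p \<in> b n \<longrightarrow> K' \<subseteq> b n))"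
  have "\<exists>f. \<forall>n. PP n (f n) \<and> QQ n (f n) (f (Suc n))"
  proof (rule dependent_nat_choice)
    show "\<exists>x. PP 0 x" using C by (auto simp: PP_def)
  next
    fix K n assume "PP n K"
    then have K: "openin X K" "closedin X K" "p \<in> K" by (auto simp: PP_def)
    define W where "W = (if p \<in> b n then K \<inter> b n else K)"
    have W: "openin X W" "p \<in> W" "W \<subseteq> K" "p \<in> b n \<longrightarrow> W \<subseteq> b n"
      using K B(2)[OF bB[of n]] by (auto simp: W_def)
    obtain x where x: "x \<in> W" "x \<noteq> p" using noiso W(1,2) by blast
    have "x \<in> topspace X" using openin_subset[OF W(1)] x(1) by blast
    then have "closedin X {x}" using t1 unfolding t1_space_closedin_singleton by blast
    then have oW: "openin X (W - {x})" using W(1) by (rule openin_diff[rotated])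
    have "p \<in> W - {x}" using x W(2) by blast
    from clopen_nbhd[OF iz oW this] obtain V where V: "openin X V" "closedin X V" "p \<in> V" "V \<subseteq> W - {x}"
      by blast
    show "\<exists>y. PP (Suc n) y \<and> QQ n K y"
      apply (rule exI[of _ V])
      using V W x by (auto simp: PP_def QQ_def)
  qed
  then obtain f where f: "\<And>n. PP n (f n)" "\<And>n. QQ n (f n) (f (Suc n))" by blast
  show ?thesis
  proof (intro exI[of _ f] conjI allI impI)
    show "f 0 = C" using f(1)[of 0] by (simp add: PP_def)
  next
    fix n
    show "openin X (f n)" "closedin X (f n)" "p \<in> f n" "f (Suc n) \<subseteq> f n" "f (Suc n) \<noteq> f n"
      using f(1)[of n] f(2)[of n] by (auto simp: PP_def QQ_def)
  next
    fix U assume "openin X U \<and> p \<in> U"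
    then obtain V where "V \<in> B" "p \<in> V" "V \<subseteq> U" using B(3) by blast
    then obtain n where "b n = V" using rb by blast
    then have "f (Suc n) \<subseteq> U" using f(2)[of n] \<open>p \<in> V\<close> \<open>V \<subseteq> U\<close> by (auto simp: QQ_def)
    then show "\<exists>n. f n \<subseteq> U" by blast
  qed
qed

lemma piece_exists:
  assumes "decseq Cs" "x \<in> Cs 0" "x \<notin> Cs n"
  shows "\<exists>m. x \<in> Cs m - Cs (Suc m)"
  using assms(3)
proof (induction n)
  case 0 then show ?case using assms(2) by simp
next
  case (Suc n)
  then show ?case by (cases "x \<in> Cs n") auto
qed

lemma piece_ge:
  assumes "decseq Cs" "x \<in> Cs m - Cs (Suc m)" "x \<in> Cs n"
  shows "n \<le> m"
proof (rule ccontr)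
  assume "\<not> n \<le> m"
  then have "Suc m \<le> n" by simp
  then have "Cs n \<subseteq> Cs (Suc m)" using assms(1) decseqD by blast
  then show False using assms by blast
qed

lemma piece_unique:
  assumes "decseq Cs" "x \<in> Cs m - Cs (Suc m)" "x \<in> Cs n - Cs (Suc n)"
  shows "m = n"
proof -
  have "n \<le> m" using piece_ge[OF assms(1,2)] assms(3) by blast
  moreover have "m \<le> n" using piece_ge[OF assms(1,3)] assms(2) by blast
  ultimately show ?thesis by simp
qed

lemma piece_the:
  assumes "decseq Cs" "x \<in> Cs m - Cs (Suc m)"
  shows "(THE n. x \<in> Cs n - Cs (Suc n)) = m"
proof (rule the_equality)
  show "x \<in> Cs m - Cs (Suc m)" by (rule assms(2))
next
  fix n assume xn: "x \<in> Cs n - Cs (Suc n)"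
  show "n = m" using piece_unique[OF assms(1) xn assms(2)] by simp
qed

lemma seq_glue_cont:
  assumes dC: "decseq Cs" and oC: "\<And>n. openin X (Cs n)" and cC: "\<And>n. closedin X (Cs n)"
    and pC: "\<And>n. p \<in> Cs n" and covC: "\<And>x. x \<in> Cs 0 \<Longrightarrow> x \<noteq> p \<Longrightarrow> \<exists>n. x \<notin> Cs n"
    and dD: "decseq Ds" and oD: "\<And>n. openin X (Ds n)" and qD: "\<And>n. q \<in> Ds n"
    and baseD: "\<And>U. openin X U \<Longrightarrow> q \<in> U \<Longrightarrow> \<exists>n. Ds n \<subseteq> U"
    and cont: "\<And>n. continuous_map (subtopology X (Cs n - Cs (Suc n))) (subtopology X (Ds n - Ds (Suc n))) (hh n)"
  shows "continuous_map (subtopology X (Cs 0)) (subtopology X (Ds 0))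
           (\<lambda>x. if x = p then q else hh (THE n. x \<in> Cs n - Cs (Suc n)) x)"
proof -
  define H where "H = (\<lambda>x. if x = p then q else hh (THE n. x \<in> Cs n - Cs (Suc n)) x)"
  have CX: "Cs n \<subseteq> topspace X" for n using oC openin_subset by blast
  have DX: "Ds n \<subseteq> topspace X" for n using oD openin_subset by blast
  have oR: "openin X (Cs n - Cs (Suc n))" for n using oC cC by blast
  have piece: "\<exists>m. x \<in> Cs m - Cs (Suc m)" if "x \<in> Cs 0" "x \<noteq> p" for x
    using covC[OF that] piece_exists[OF dC that(1)] by blast
  have Hp: "H p = q" by (simp add: H_def)
  have Hm: "H x = hh m x" if "x \<in> Cs m - Cs (Suc m)" for x m
  proof -
    have "x \<noteq> p" using that pC by blast
    then show ?thesis using piece_the[OF dC that] by (simp add: H_def)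
  qed
  have hhS: "hh m x \<in> Ds m - Ds (Suc m)" if "x \<in> Cs m - Cs (Suc m)" for x m
    using cont[of m] that CX unfolding continuous_map_def by auto
  have Hin: "H x \<in> Ds n" if xn: "x \<in> Cs n" for x n
  proof (cases "x = p")
    case True then show ?thesis using qD Hp by simp
  next
    case False
    then obtain m where m: "x \<in> Cs m - Cs (Suc m)" using piece[of x] xn decseqD[OF dC, of 0 n] by blast
    have "n \<le> m" using piece_ge[OF dC m xn] .
    then have "Ds m \<subseteq> Ds n" using decseqD[OF dD] by blast
    then show ?thesis using Hm[OF m] hhS[OF m] by auto
  qed
  have "continuous_map (subtopology X (Cs 0)) (subtopology X (Ds 0)) H"
    unfolding continuous_map
  proof (intro conjI allI impI)
    show "H ` topspace (subtopology X (Cs 0)) \<subseteq> topspace (subtopology X (Ds 0))"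
      using Hin[of _ 0] DX[of 0] by auto
  next
    fix U assume "openin (subtopology X (Ds 0)) U"
    then have U: "openin X U" "U \<subseteq> Ds 0" using openin_open_subtopology oD by blast+
    let ?S = "{x \<in> topspace (subtopology X (Cs 0)). H x \<in> U}"
    have "openin X ?S"
    proof (subst openin_subopen, intro ballI)
      fix x assume xS: "x \<in> ?S"
      show "\<exists>T. openin X T \<and> x \<in> T \<and> T \<subseteq> ?S"
      proof (cases "x = p")
        case True
        then have "q \<in> U" using xS Hp by simp
        then obtain n where n: "Ds n \<subseteq> U" using baseD U(1) by blast
        have "Cs n \<subseteq> ?S" using Hin[of _ n] n CX[of n] decseqD[OF dC, of 0 n] by auto
        then show ?thesis using oC[of n] pC[of n] True by blast
      next
        case False
        then obtain m where m: "x \<in> Cs m - Cs (Suc m)" using piece xS by auto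
        define T where "T = {y \<in> topspace (subtopology X (Cs m - Cs (Suc m))). hh m y \<in> U \<inter> (Ds m - Ds (Suc m))}"
        have "openin (subtopology X (Ds m - Ds (Suc m))) (U \<inter> (Ds m - Ds (Suc m)))"
          using U(1) by (simp add: openin_subtopology_Int)
        then have "openin (subtopology X (Cs m - Cs (Suc m))) T"
          using cont[of m] unfolding T_def continuous_map by blast
        then have "openin X T" using openin_open_subtopology oR by blast
        moreover have "x \<in> T" using xS m Hm[OF m] hhS[OF m] by (auto simp: T_def)
        moreover have "T \<subseteq> ?S"
        proof
          fix y assume "y \<in> T"
          then have y: "y \<in> Cs m - Cs (Suc m)" "hh m y \<in> U" "y \<in> topspace X" by (auto simp: T_def)
          then have "y \<in> Cs 0" using decseqD[OF dC, of 0 m] by auto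
          then show "y \<in> ?S" using y Hm[OF y(1)] by auto
        qed
        ultimately show ?thesis by blast
      qed
    qed
    moreover have "?S \<subseteq> Cs 0" by auto
    ultimately show "openin (subtopology X (Cs 0)) ?S" using openin_open_subtopology oC by blast
  qed
  then show ?thesis unfolding H_def .
qed

lemma seq_cover:
  assumes H: "Hausdorff_space X" and base: "\<And>U. openin X U \<Longrightarrow> p \<in> U \<Longrightarrow> \<exists>n. Cs n \<subseteq> U"
    and x: "x \<in> topspace X" "x \<noteq> p" and p: "p \<in> topspace X"
  shows "\<exists>n. x \<notin> Cs n"
proof -
  have "closedin X {x}" using H Hausdorff_imp_t1_space x(1) unfolding t1_space_closedin_singleton by blast
  then have "openin X (topspace X - {x})" by (simp add: closedin_def)
  then obtain n where "Cs n \<subseteq> topspace X - {x}" using base x p by blast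
  then show ?thesis by blast
qed

lemma point_homog:
  assumes H: "Hausdorff_space X" and fc: "first_countable X" and iz: "ind_zero X"
    and sh: "strongly_homogeneous X"
    and noiso: "\<forall>U z. openin X U \<and> z \<in> U \<longrightarrow> (\<exists>y\<in>U. y \<noteq> z)"
    and C: "openin X C" "closedin X C" "p \<in> C"
    and D: "openin X D" "closedin X D" "q \<in> D"
  shows "\<exists>h k. homeomorphic_maps (subtopology X C) (subtopology X D) h k \<and> h p = q"
proof -
  from clopen_seq[OF H fc iz noiso C] obtain Cs where Cs0: "Cs 0 = C"
    and CsP': "\<forall>n. openin X (Cs n) \<and> closedin X (Cs n) \<and> p \<in> Cs n \<and> Cs (Suc n) \<subseteq> Cs n \<and> Cs (Suc n) \<noteq> Cs n"
    and Csb': "\<forall>U. openin X U \<and> p \<in> U \<longrightarrow> (\<exists>n. Cs n \<subseteq> U)"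
    by (elim exE conjE)
  have CsP: "openin X (Cs n) \<and> closedin X (Cs n) \<and> p \<in> Cs n \<and> Cs (Suc n) \<subseteq> Cs n \<and> Cs (Suc n) \<noteq> Cs n" for n
    using CsP' by (rule spec)
  have Csb: "\<exists>n. Cs n \<subseteq> U" if "openin X U" "p \<in> U" for U
    using Csb' that by blast
  from clopen_seq[OF H fc iz noiso D] obtain Ds where Ds0: "Ds 0 = D"
    and DsP': "\<forall>n. openin X (Ds n) \<and> closedin X (Ds n) \<and> q \<in> Ds n \<and> Ds (Suc n) \<subseteq> Ds n \<and> Ds (Suc n) \<noteq> Ds n"
    and Dsb': "\<forall>U. openin X U \<and> q \<in> U \<longrightarrow> (\<exists>n. Ds n \<subseteq> U)"
    by (elim exE conjE)
  have DsP: "openin X (Ds n) \<and> closedin X (Ds n) \<and> q \<in> Ds n \<and> Ds (Suc n) \<subseteq> Ds n \<and> Ds (Suc n) \<noteq> Ds n" for n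
    using DsP' by (rule spec)
  have Dsb: "\<exists>n. Ds n \<subseteq> U" if "openin X U" "q \<in> U" for U
    using Dsb' that by blast
  have dC: "decseq Cs" using CsP by (intro decseq_SucI) blast
  have dD: "decseq Ds" using DsP by (intro decseq_SucI) blast
  have pX: "p \<in> topspace X" using C openin_subset by blast
  have qX: "q \<in> topspace X" using D openin_subset by blast
  have CX: "Cs n \<subseteq> topspace X" for n using CsP openin_subset by blast
  have DX: "Ds n \<subseteq> topspace X" for n using DsP openin_subset by blast
  have covC: "\<exists>n. x \<notin> Cs n" if "x \<in> Cs 0" "x \<noteq> p" for x
    using seq_cover[OF H Csb _ that(2) pX] that(1) CX by blast
  have covD: "\<exists>n. x \<notin> Ds n" if "x \<in> Ds 0" "x \<noteq> q" for x
    using seq_cover[OF H Dsb _ that(2) qX] that(1) DX by blast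
  have hom: "\<exists>h k. homeomorphic_maps (subtopology X (Cs n - Cs (Suc n))) (subtopology X (Ds n - Ds (Suc n))) h k" for n
  proof -
    have a: "openin X (Cs n - Cs (Suc n))" "closedin X (Cs n - Cs (Suc n))" "Cs n - Cs (Suc n) \<noteq> {}"
      using CsP[of n] CsP[of "Suc n"] by auto
    have b: "openin X (Ds n - Ds (Suc n))" "closedin X (Ds n - Ds (Suc n))" "Ds n - Ds (Suc n) \<noteq> {}"
      using DsP[of n] DsP[of "Suc n"] by auto
    show ?thesis using sh a b unfolding strongly_homogeneous_def homeomorphic_space_def by blast
  qed
  have "\<forall>n. \<exists>hk. homeomorphic_maps (subtopology X (Cs n - Cs (Suc n))) (subtopology X (Ds n - Ds (Suc n))) (fst hk) (snd hk)"
    using hom by (metis fst_conv snd_conv)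
  then obtain hk where hk: "\<And>n. homeomorphic_maps (subtopology X (Cs n - Cs (Suc n))) (subtopology X (Ds n - Ds (Suc n))) (fst (hk n)) (snd (hk n))"
    by metis
  define hh where "hh = (\<lambda>n. fst (hk n))"
  define kk where "kk = (\<lambda>n. snd (hk n))"
  have hm: "homeomorphic_maps (subtopology X (Cs n - Cs (Suc n))) (subtopology X (Ds n - Ds (Suc n))) (hh n) (kk n)" for n
    using hk hh_def kk_def by simp
  define Hf where "Hf = (\<lambda>x. if x = p then q else hh (THE n. x \<in> Cs n - Cs (Suc n)) x)"
  define Kf where "Kf = (\<lambda>x. if x = q then p else kk (THE n. x \<in> Ds n - Ds (Suc n)) x)"
  have c1: "continuous_map (subtopology X (Cs 0)) (subtopology X (Ds 0)) Hf"
    unfolding Hf_def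
    apply (rule seq_glue_cont[OF dC _ _ _ covC dD])
    using CsP DsP Dsb hm unfolding homeomorphic_maps_def by blast+
  have c2: "continuous_map (subtopology X (Ds 0)) (subtopology X (Cs 0)) Kf"
    unfolding Kf_def
    apply (rule seq_glue_cont[OF dD _ _ _ covD dC])
    using CsP DsP Csb hm unfolding homeomorphic_maps_def by blast+
  have i1: "Kf (Hf x) = x" if x0: "x \<in> Cs 0" for x
  proof (cases "x = p")
    case True then show ?thesis by (simp add: Hf_def Kf_def)
  next
    case False
    then obtain m where m: "x \<in> Cs m - Cs (Suc m)" using covC[OF x0 False] piece_exists[OF dC x0] by blast
    have xX: "x \<in> topspace X" using m CX by blast
    have Hx: "Hf x = hh m x" using False piece_the[OF dC m] by (simp add: Hf_def)
    have "hh m x \<in> Ds m - Ds (Suc m)" "kk m (hh m x) = x"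
      using hm[of m] m xX unfolding homeomorphic_maps_def continuous_map_def by auto
    moreover have "hh m x \<noteq> q" using calculation(1) DsP[of "Suc m"] by blast
    ultimately show ?thesis using Hx piece_the[OF dD] by (simp add: Kf_def)
  qed
  have i2: "Hf (Kf x) = x" if x0: "x \<in> Ds 0" for x
  proof (cases "x = q")
    case True then show ?thesis by (simp add: Hf_def Kf_def)
  next
    case False
    then obtain m where m: "x \<in> Ds m - Ds (Suc m)" using covD[OF x0 False] piece_exists[OF dD x0] by blast
    have xX: "x \<in> topspace X" using m DX by blast
    have Kx: "Kf x = kk m x" using False piece_the[OF dD m] by (simp add: Kf_def)
    have "kk m x \<in> Cs m - Cs (Suc m)" "hh m (kk m x) = x"
      using hm[of m] m xX unfolding homeomorphic_maps_def continuous_map_def by auto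
    moreover have "kk m x \<noteq> p" using calculation(1) CsP[of "Suc m"] by blast
    ultimately show ?thesis using Kx piece_the[OF dC] by (simp add: Hf_def)
  qed
  have "homeomorphic_maps (subtopology X C) (subtopology X D) Hf Kf"
    unfolding homeomorphic_maps_def using c1 c2 i1 i2 Cs0 Ds0 by auto
  moreover have "Hf p = q" by (simp add: Hf_def)
  ultimately show ?thesis by blast
qed

lemma discrete_subsetD:
  assumes "discrete_subset X D" "x \<in> topspace X"
  shows "\<exists>U. openin X U \<and> x \<in> U \<and> (\<forall>a\<in>D \<inter> U. \<forall>b\<in>D \<inter> U. a = b)"
proof -
  have "\<forall>x\<in>topspace X. \<exists>U. openin X U \<and> x \<in> U \<and> (\<forall>a\<in>D \<inter> U. \<forall>b\<in>D \<inter> U. a = b)"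
    using assms(1) unfolding discrete_subset_def by (rule conjunct2)
  then show ?thesis using assms(2) by (rule bspec)
qed

lemma discrete_Un:
  assumes H: "Hausdorff_space X" and A: "discrete_subset X A" and B: "discrete_subset X B"
  shows "discrete_subset X (A \<union> B)"
  unfolding discrete_subset_def
proof (intro conjI ballI)
  show "A \<union> B \<subseteq> topspace X" using A B by (simp add: discrete_subset_def)
next
  fix x assume x: "x \<in> topspace X"
  obtain UA where UA: "openin X UA" "x \<in> UA" "\<forall>a\<in>A \<inter> UA. \<forall>b\<in>A \<inter> UA. a = b"
    using discrete_subsetD[OF A x] by (elim exE conjE) (rule that)
  obtain UB where UB: "openin X UB" "x \<in> UB" "\<forall>a\<in>B \<inter> UB. \<forall>b\<in>B \<inter> UB. a = b"
    using discrete_subsetD[OF B x] by (elim exE conjE) (rule that)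
  define U0 where "U0 = UA \<inter> UB"
  have U0: "openin X U0" "x \<in> U0" using UA UB by (auto simp: U0_def)
  have t1: "\<And>y. y \<in> topspace X \<Longrightarrow> closedin X {y}"
    using H Hausdorff_imp_t1_space unfolding t1_space_closedin_singleton by blast
  have ABX: "A \<subseteq> topspace X" "B \<subseteq> topspace X" using A B by (simp_all add: discrete_subset_def)
  show "\<exists>U. openin X U \<and> x \<in> U \<and> (\<forall>a\<in>(A \<union> B) \<inter> U. \<forall>b\<in>(A \<union> B) \<inter> U. a = b)"
  proof (cases "\<exists>a\<in>A \<inter> U0. \<exists>b\<in>B \<inter> U0. a \<noteq> b")
    case True
    then obtain a b where ab: "a \<in> A \<inter> U0" "b \<in> B \<inter> U0" "a \<noteq> b" by blast
    define c where "c = (if x = a then b else a)"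
    have cX: "c \<in> topspace X" using ab ABX by (auto simp: c_def)
    have "openin X (U0 - {c})" using U0(1) t1[OF cX] by (rule openin_diff)
    moreover have "x \<in> U0 - {c}" using U0 ab by (auto simp: c_def)
    moreover have "\<forall>u\<in>(A \<union> B) \<inter> (U0 - {c}). \<forall>v\<in>(A \<union> B) \<inter> (U0 - {c}). u = v"
    proof (intro ballI)
      fix u v assume u: "u \<in> (A \<union> B) \<inter> (U0 - {c})" and v: "v \<in> (A \<union> B) \<inter> (U0 - {c})"
      have Aeq: "y = a" if "y \<in> A" "y \<in> U0" for y using UA(3) that ab(1) by (auto simp: U0_def)
      have Beq: "y = b" if "y \<in> B" "y \<in> U0" for y using UB(3) that ab(2) by (auto simp: U0_def)
      show "u = v"
      proof (cases "x = a")
        case True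
        then have "c = b" by (simp add: c_def)
        have "u \<in> A \<or> u \<in> B" "u \<in> U0" "u \<noteq> c" "v \<in> A \<or> v \<in> B" "v \<in> U0" "v \<noteq> c" using u v by auto
        then show ?thesis using Aeq Beq \<open>c = b\<close> by metis
      next
        case False
        then have "c = a" by (simp add: c_def)
        have "u \<in> A \<or> u \<in> B" "u \<in> U0" "u \<noteq> c" "v \<in> A \<or> v \<in> B" "v \<in> U0" "v \<noteq> c" using u v by auto
        then show ?thesis using Aeq Beq \<open>c = a\<close> by metis
      qed
    qed
    ultimately show ?thesis by blast
  next
    case False
    have "\<forall>u\<in>(A \<union> B) \<inter> U0. \<forall>v\<in>(A \<union> B) \<inter> U0. u = v"
    proof (intro ballI)
      fix u v assume u: "u \<in> (A \<union> B) \<inter> U0" and v: "v \<in> (A \<union> B) \<inter> U0"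
      have Aeq: "y = z" if "y \<in> A" "y \<in> U0" "z \<in> A" "z \<in> U0" for y z using UA(3) that by (auto simp: U0_def)
      have Beq: "y = z" if "y \<in> B" "y \<in> U0" "z \<in> B" "z \<in> U0" for y z using UB(3) that by (auto simp: U0_def)
      have F: "a = b" if "a \<in> A" "a \<in> U0" "b \<in> B" "b \<in> U0" for a b
        using False that by auto
      have "u \<in> A \<or> u \<in> B" "u \<in> U0" "v \<in> A \<or> v \<in> B" "v \<in> U0" using u v by auto
      then show "u = v" using Aeq Beq F by metis
    qed
    then show ?thesis using U0 by blast
  qed
qed

lemma discrete_union_closed:
  assumes cl: "\<forall>p\<in>P. closedin X (K p)" and sub: "\<forall>p\<in>P. K p \<subseteq> W p"
    and loc: "\<forall>x\<in>topspace X. \<exists>U. openin X U \<and> x \<in> U \<and> (\<forall>p\<in>P. \<forall>p'\<in>P. W p \<inter> U \<noteq> {} \<and> W p' \<inter> U \<noteq> {} \<longrightarrow> p = p')"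
    and Q: "Q \<subseteq> P"
  shows "closedin X (\<Union>(K ` Q))"
proof (rule closedin_locally_finite_Union)
  show "\<And>S. S \<in> K ` Q \<Longrightarrow> closedin X S" using cl Q by blast
  show "locally_finite_in X (K ` Q)"
    unfolding locally_finite_in_def
  proof (intro conjI ballI)
    show "\<Union> (K ` Q) \<subseteq> topspace X"
    proof (rule UN_least)
      fix p assume "p \<in> Q"
      then have "closedin X (K p)" using cl Q by blast
      then show "K p \<subseteq> topspace X" by (rule closedin_subset)
    qed
  next
    fix x assume "x \<in> topspace X"
    then have "\<exists>U. openin X U \<and> x \<in> U \<and> (\<forall>p\<in>P. \<forall>p'\<in>P. W p \<inter> U \<noteq> {} \<and> W p' \<inter> U \<noteq> {} \<longrightarrow> p = p')"
      using loc by (rule bspec[rotated])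
    then obtain U where U: "openin X U" "x \<in> U" "\<forall>p\<in>P. \<forall>p'\<in>P. W p \<inter> U \<noteq> {} \<and> W p' \<inter> U \<noteq> {} \<longrightarrow> p = p'"
      by (elim exE conjE) (rule that)
    have "finite {S \<in> K ` Q. S \<inter> U \<noteq> {}}"
    proof (cases "{S \<in> K ` Q. S \<inter> U \<noteq> {}} = {}")
      case True show ?thesis unfolding True by (rule finite.emptyI)
    next
      case False
      then obtain p0 where p0: "p0 \<in> Q" "K p0 \<inter> U \<noteq> {}" by auto
      have "{S \<in> K ` Q. S \<inter> U \<noteq> {}} \<subseteq> {K p0}"
      proof (clarify, rule arg_cong[of _ _ K])
        fix p assume p: "p \<in> Q" "K p \<inter> U \<noteq> {}"
        have "K p \<subseteq> W p" "K p0 \<subseteq> W p0" using p(1) p0(1) sub Q by auto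
        then have "W p \<inter> U \<noteq> {}" "W p0 \<inter> U \<noteq> {}" using p(2) p0(2) by auto
        moreover have "p \<in> P" "p0 \<in> P" using p(1) p0(1) Q by auto
        ultimately show "p = p0" using U(3) by simp
      qed
      then show ?thesis by (rule finite_subset) simp
    qed
    then show "\<exists>V. openin X V \<and> x \<in> V \<and> finite {S \<in> K ` Q. S \<inter> V \<noteq> {}}" using U(1,2) by (intro exI[of _ U]) simp
  qed
qed

theorem mainTheorem6:
  fixes X :: "'a topology"
  assumes "collectionwise_normal X"
    and "first_countable X"
    and "strongly_homogeneous X"
    and "ind_zero X"
  shows "strongly_discrete_homogeneous X"
proof -
  have H: "Hausdorff_space X" using assms(3) by (simp add: strongly_homogeneous_def)
  have sing: "closedin X {x}" if "x \<in> topspace X" for x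
    using H Hausdorff_imp_t1_space that unfolding t1_space_closedin_singleton by blast
  have shom: "subtopology X C homeomorphic_space subtopology X D"
    if "openin X C" "closedin X C" "C \<noteq> {}" "openin X D" "closedin X D" "D \<noteq> {}" for C D
    using assms(3) that unfolding strongly_homogeneous_def by blast
  show ?thesis unfolding strongly_discrete_homogeneous_def
  proof (intro conjI allI impI)
    show "Hausdorff_space X" by (rule H)
  next
    fix A B and f :: "'a \<Rightarrow> 'a"
    assume ABf: "discrete_subset X A \<and> discrete_subset X B \<and> bij_betw f A B"
    then have dA: "discrete_subset X A" and dB: "discrete_subset X B" and bf: "bij_betw f A B" by auto
    have AX: "A \<subseteq> topspace X" using dA by (simp add: discrete_subset_def)
    have BX: "B \<subseteq> topspace X" using dB by (simp add: discrete_subset_def)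
    have fAB: "f ` A = B" using bf by (simp add: bij_betw_def)
    have finj: "inj_on f A" using bf by (simp add: bij_betw_def)
    show "\<exists>h. homeomorphic_map X X h \<and> (\<forall>a\<in>A. h a = f a)"
    proof (cases "A = {} \<or> (\<forall>x\<in>topspace X. \<forall>y\<in>topspace X. x = y)")
      case True
      have "\<forall>a\<in>A. id a = f a"
      proof
        fix a assume a: "a \<in> A"
        then have "A \<noteq> {}" by blast
        then have "\<forall>x\<in>topspace X. \<forall>y\<in>topspace X. x = y" using True by blast
        moreover have "a \<in> topspace X" "f a \<in> topspace X" using a AX BX fAB by auto
        ultimately show "id a = f a" by simp
      qed
      then show ?thesis by (intro exI[of _ id]) simp
    next
      case False
      then have Ane: "A \<noteq> {}" and two: "\<exists>x\<in>topspace X. \<exists>y\<in>topspace X. x \<noteq> y" by auto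
      have noiso: "\<forall>U z. openin X U \<and> z \<in> U \<longrightarrow> (\<exists>y\<in>U. y \<noteq> z)"
      proof (intro allI impI)
        fix U z assume Uz: "openin X U \<and> z \<in> U"
        show "\<exists>y\<in>U. y \<noteq> z"
        proof (rule ccontr)
          assume "\<not> (\<exists>y\<in>U. y \<noteq> z)"
          then have Ueq: "U = {z}" using Uz by auto
          have zX: "z \<in> topspace X" using Uz openin_subset by auto
          have "subtopology X {z} homeomorphic_space subtopology X (topspace X)"
          proof (rule shom)
            show "openin X {z}" using Uz Ueq by simp
            show "closedin X {z}" by (rule sing[OF zX])
            show "{z} \<noteq> {}" by simp
            show "openin X (topspace X)" by (rule openin_topspace)
            show "closedin X (topspace X)" by (rule closedin_topspace)
            show "topspace X \<noteq> {}" using zX by blast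
          qed
          then obtain f1 g1 where fg: "homeomorphic_maps (subtopology X {z}) (subtopology X (topspace X)) f1 g1"
            unfolding homeomorphic_space_def by blast
          have gz: "g1 y = z" and fgy: "f1 (g1 y) = y" if "y \<in> topspace X" for y
            using fg that unfolding homeomorphic_maps_def continuous_map_def by auto
          obtain x y where xy: "x \<in> topspace X" "y \<in> topspace X" "x \<noteq> y" using two by blast
          have "x = f1 z" using fgy[OF xy(1)] gz[OF xy(1)] by simp
          moreover have "y = f1 z" using fgy[OF xy(2)] gz[OF xy(2)] by simp
          ultimately show False using xy(3) by simp
        qed
      qed
      define P where "P = A \<union> B"
      have dP: "discrete_subset X P" unfolding P_def by (rule discrete_Un[OF H dA dB])
      have PX: "P \<subseteq> topspace X" using AX BX by (simp add: P_def)
      define S where "S = (\<lambda>p. {p}) ` P"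
      have Scl: "\<forall>s\<in>S. closedin X s" using sing PX by (auto simp: S_def)
      have Sdf: "discrete_family X S (\<lambda>s. s)"
        unfolding discrete_family_def
      proof
        fix x assume x: "x \<in> topspace X"
        obtain U where U: "openin X U" "x \<in> U" "\<forall>a\<in>P \<inter> U. \<forall>b\<in>P \<inter> U. a = b"
          using discrete_subsetD[OF dP x] by (elim exE conjE) (rule that)
        have "\<forall>s\<in>S. \<forall>t\<in>S. s \<inter> U \<noteq> {} \<and> t \<inter> U \<noteq> {} \<longrightarrow> s = t"
        proof (intro ballI impI)
          fix s t assume st: "s \<in> S" "t \<in> S" "s \<inter> U \<noteq> {} \<and> t \<inter> U \<noteq> {}"
          then obtain a b where ab: "a \<in> P" "b \<in> P" "s = {a}" "t = {b}" by (auto simp: S_def)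
          then have "a \<in> U" "b \<in> U" using st(3) by auto
          then have "a = b" using U(3) ab(1,2) by auto
          then show "s = t" using ab by simp
        qed
        then show "\<exists>U. openin X U \<and> x \<in> U \<and> (\<forall>s\<in>S. \<forall>t\<in>S. s \<inter> U \<noteq> {} \<and> t \<inter> U \<noteq> {} \<longrightarrow> s = t)"
          using U(1,2) by (intro exI[of _ U]) simp
      qed
      have cw: "\<forall>(S :: 'a set set) (F :: 'a set \<Rightarrow> 'a set).
        (\<forall>s\<in>S. closedin X (F s)) \<and> discrete_family X S F \<longrightarrow>
        (\<exists>V. (\<forall>s\<in>S. openin X (V s) \<and> F s \<subseteq> V s) \<and> discrete_family X S V)"
        using assms(1) unfolding collectionwise_normal_def by (rule conjunct2)
      have "\<exists>V. (\<forall>s\<in>S. openin X (V s) \<and> s \<subseteq> V s) \<and> discrete_family X S V"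
        using cw[THEN spec[of _ S], THEN spec[of _ "\<lambda>s. s"], THEN mp, OF conjI[OF Scl Sdf]] by simp
      then obtain V where V1: "\<forall>s\<in>S. openin X (V s) \<and> s \<subseteq> V s" and V2: "discrete_family X S V"
        by (elim exE conjE)
      define W where "W = (\<lambda>p. V {p})"
      have Wo: "openin X (W p)" and Wp: "p \<in> W p" if "p \<in> P" for p
        using V1 that by (auto simp: W_def S_def)
      have loc: "\<forall>x\<in>topspace X. \<exists>U. openin X U \<and> x \<in> U \<and> (\<forall>p\<in>P. \<forall>p'\<in>P. W p \<inter> U \<noteq> {} \<and> W p' \<inter> U \<noteq> {} \<longrightarrow> p = p')"
      proof
        fix x assume x: "x \<in> topspace X"
        have "\<forall>x\<in>topspace X. \<exists>U. openin X U \<and> x \<in> U \<and> (\<forall>s\<in>S. \<forall>t\<in>S. V s \<inter> U \<noteq> {} \<and> V t \<inter> U \<noteq> {} \<longrightarrow> s = t)"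
          using V2 unfolding discrete_family_def .
        then have "\<exists>U. openin X U \<and> x \<in> U \<and> (\<forall>s\<in>S. \<forall>t\<in>S. V s \<inter> U \<noteq> {} \<and> V t \<inter> U \<noteq> {} \<longrightarrow> s = t)"
          using x by (rule bspec)
        then obtain U where U: "openin X U" "x \<in> U" "\<forall>s\<in>S. \<forall>t\<in>S. V s \<inter> U \<noteq> {} \<and> V t \<inter> U \<noteq> {} \<longrightarrow> s = t"
          by (elim exE conjE) (rule that)
        have "\<forall>p\<in>P. \<forall>p'\<in>P. W p \<inter> U \<noteq> {} \<and> W p' \<inter> U \<noteq> {} \<longrightarrow> p = p'"
        proof (intro ballI impI)
          fix p p' assume pp: "p \<in> P" "p' \<in> P" "W p \<inter> U \<noteq> {} \<and> W p' \<inter> U \<noteq> {}"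
          have "{p} \<in> S" "{p'} \<in> S" using pp by (auto simp: S_def)
          then have "{p} = {p'}" using U(3) pp(3) unfolding W_def by blast
          then show "p = p'" by simp
        qed
        then show "\<exists>U. openin X U \<and> x \<in> U \<and> (\<forall>p\<in>P. \<forall>p'\<in>P. W p \<inter> U \<noteq> {} \<and> W p' \<inter> U \<noteq> {} \<longrightarrow> p = p')"
          using U(1,2) by (intro exI[of _ U]) simp
      qed
      have Wdisj: "W p \<inter> W p' = {}" if "p \<in> P" "p' \<in> P" "p \<noteq> p'" for p p'
      proof (rule ccontr)
        assume "W p \<inter> W p' \<noteq> {}"
        then obtain x where x: "x \<in> W p" "x \<in> W p'" by blast
        have xX: "x \<in> topspace X" using x(1) Wo[OF that(1)] openin_subset by blast
        obtain U where U: "openin X U" "x \<in> U" "\<forall>p\<in>P. \<forall>p'\<in>P. W p \<inter> U \<noteq> {} \<and> W p' \<inter> U \<noteq> {} \<longrightarrow> p = p'"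
          using bspec[OF loc xX] by (elim exE conjE) (rule that)
        have "W p \<inter> U \<noteq> {}" "W p' \<inter> U \<noteq> {}" using x U(2) by auto
        then have "p = p'" using U(3) that(1,2) by simp
        then show False using that(3) by simp
      qed
      have "\<forall>p\<in>P. \<exists>K. openin X K \<and> closedin X K \<and> p \<in> K \<and> K \<subseteq> W p \<and> \<not> W p \<subseteq> K"
      proof
        fix p assume p: "p \<in> P"
        obtain x where x: "x \<in> W p" "x \<noteq> p" using noiso Wo[OF p] Wp[OF p] by blast
        have xX: "x \<in> topspace X" using x(1) Wo[OF p] openin_subset by blast
        have o: "openin X (W p - {x})" using Wo[OF p] sing[OF xX] by (rule openin_diff)
        have "p \<in> W p - {x}" using Wp[OF p] x(2) by simp
        from clopen_nbhd[OF assms(4) o this] obtain K where K: "openin X K" "closedin X K" "p \<in> K" "K \<subseteq> W p - {x}"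
          by (elim exE conjE)
        then show "\<exists>K. openin X K \<and> closedin X K \<and> p \<in> K \<and> K \<subseteq> W p \<and> \<not> W p \<subseteq> K"
          using x(1) by (intro exI[of _ K]) auto
      qed
      then obtain K where K: "\<forall>p\<in>P. openin X (K p) \<and> closedin X (K p) \<and> p \<in> K p \<and> K p \<subseteq> W p \<and> \<not> W p \<subseteq> K p"
        by (rule bchoice[THEN exE])
      have Ko: "openin X (K p)" and Kc: "closedin X (K p)" and Kp: "p \<in> K p" and KW: "K p \<subseteq> W p"
        and KnW: "\<not> W p \<subseteq> K p" if "p \<in> P" for p
        using K that by auto
      have KX: "K p \<subseteq> topspace X" if "p \<in> P" for p using Ko[OF that] by (rule openin_subset)
      have Kdisj: "K p \<inter> K p' = {}" if "p \<in> P" "p' \<in> P" "p \<noteq> p'" for p p'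
        using Wdisj[OF that] KW[OF that(1)] KW[OF that(2)] by blast
      define UA where "UA = \<Union>(K ` A)"
      define UB where "UB = \<Union>(K ` B)"
      have UAc: "closedin X UA" unfolding UA_def
        by (rule discrete_union_closed[of P X K W A]) (use Kc KW loc in \<open>auto simp: P_def\<close>)
      have UBc: "closedin X UB" unfolding UB_def
        by (rule discrete_union_closed[of P X K W B]) (use Kc KW loc in \<open>auto simp: P_def\<close>)
      have UAo: "openin X UA" unfolding UA_def using Ko by (auto simp: P_def)
      have UBo: "openin X UB" unfolding UB_def using Ko by (auto simp: P_def)
      define E where "E = topspace X - UA"
      define E' where "E' = topspace X - UB"
      have Eo: "openin X E" using UAc by (simp add: E_def closedin_def)
      have E'o: "openin X E'" using UBc by (simp add: E'_def closedin_def)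
      have Ec: "closedin X E" unfolding E_def using closedin_topspace UAo by (rule closedin_diff)
      have E'c: "closedin X E'" unfolding E'_def using closedin_topspace UBo by (rule closedin_diff)
      have nonempty: "topspace X - \<Union>(K ` Q) \<noteq> {}" if "Q \<subseteq> P" "q0 \<in> Q" for Q q0
      proof -
        have q0: "q0 \<in> P" using that by blast
        obtain x where x: "x \<in> W q0" "x \<notin> K q0" using KnW[OF q0] by blast
        have xX: "x \<in> topspace X" using x(1) Wo[OF q0] openin_subset by blast
        have "x \<notin> K q" if "q \<in> Q" for q
        proof (cases "q = q0")
          case True then show ?thesis using x(2) by simp
        next
          case False
          have "q \<in> P" using that \<open>Q \<subseteq> P\<close> by blast
          then have "W q \<inter> W q0 = {}" using Wdisj[OF _ q0 False] by blast
          then show ?thesis using KW[OF \<open>q \<in> P\<close>] x(1) by blast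
        qed
        then show ?thesis using xX by blast
      qed
      obtain a0 where a0: "a0 \<in> A" using Ane by blast
      have Ene: "E \<noteq> {}" unfolding E_def UA_def using nonempty[of A a0] a0 by (simp add: P_def)
      have E'ne: "E' \<noteq> {}" unfolding E'_def UB_def using nonempty[of B "f a0"] a0 fAB by (auto simp: P_def)
      obtain g g' where gg: "homeomorphic_maps (subtopology X E) (subtopology X E') g g'"
        using shom[OF Eo Ec Ene E'o E'c E'ne] unfolding homeomorphic_space_def by blast
      have "\<forall>a\<in>A. \<exists>hk. homeomorphic_maps (subtopology X (K a)) (subtopology X (K (f a))) (fst hk) (snd hk) \<and> fst hk a = f a"
      proof
        fix a assume a: "a \<in> A"
        have aP: "a \<in> P" and faP: "f a \<in> P" using a fAB by (auto simp: P_def)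
        obtain h k where "homeomorphic_maps (subtopology X (K a)) (subtopology X (K (f a))) h k \<and> h a = f a"
          using point_homog[OF H assms(2) assms(4) assms(3) noiso Ko[OF aP] Kc[OF aP] Kp[OF aP] Ko[OF faP] Kc[OF faP] Kp[OF faP]]
          by (elim exE)
        then show "\<exists>hk. homeomorphic_maps (subtopology X (K a)) (subtopology X (K (f a))) (fst hk) (snd hk) \<and> fst hk a = f a"
          by (intro exI[of _ "(h, k)"]) simp
      qed
      then obtain hk where hk: "\<forall>a\<in>A. homeomorphic_maps (subtopology X (K a)) (subtopology X (K (f a))) (fst (hk a)) (snd (hk a)) \<and> fst (hk a) a = f a"
        by (rule bchoice[THEN exE])
      define I where "I = insert None (Some ` A)"
      define P' where "P' = (\<lambda>i. case i of None \<Rightarrow> E | Some a \<Rightarrow> K a)"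
      define Q' where "Q' = (\<lambda>i. case i of None \<Rightarrow> E' | Some a \<Rightarrow> K (f a))"
      define h' where "h' = (\<lambda>i. case i of None \<Rightarrow> g | Some a \<Rightarrow> fst (hk a))"
      define k' where "k' = (\<lambda>i. case i of None \<Rightarrow> g' | Some a \<Rightarrow> snd (hk a))"
      have AP: "a \<in> P" if "a \<in> A" for a using that by (simp add: P_def)
      have fAP: "f a \<in> P" if "a \<in> A" for a using that fAB by (auto simp: P_def)
      have oP': "openin X (P' i)" if "i \<in> I" for i
        using that Eo Ko AP by (auto simp: I_def P'_def)
      have oQ': "openin X (Q' i)" if "i \<in> I" for i
        using that E'o Ko fAP by (auto simp: I_def Q'_def)
      have dP': "P' i \<inter> P' j = {}" if ij: "i \<in> I" "j \<in> I" "i \<noteq> j" for i j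
      proof (cases i)
        case None
        then obtain b where "j = Some b" "b \<in> A" using ij by (auto simp: I_def)
        then show ?thesis using None by (auto simp: P'_def E_def UA_def)
      next
        case (Some a)
        then have a: "a \<in> A" using ij by (auto simp: I_def)
        show ?thesis
        proof (cases j)
          case None then show ?thesis using Some a by (auto simp: P'_def E_def UA_def)
        next
          case (Some b)
          then have "b \<in> A" "a \<noteq> b" using ij \<open>i = Some a\<close> by (auto simp: I_def)
          then show ?thesis using Kdisj[OF AP[OF a] AP[OF \<open>b \<in> A\<close>]] Some \<open>i = Some a\<close> by (simp add: P'_def)
        qed
      qed
      have dQ': "Q' i \<inter> Q' j = {}" if ij: "i \<in> I" "j \<in> I" "i \<noteq> j" for i j
      proof (cases i)
        case None
        then obtain b where "j = Some b" "b \<in> A" using ij by (auto simp: I_def)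
        then show ?thesis using None fAB by (auto simp: Q'_def E'_def UB_def)
      next
        case (Some a)
        then have a: "a \<in> A" using ij by (auto simp: I_def)
        show ?thesis
        proof (cases j)
          case None then show ?thesis using Some a fAB by (auto simp: Q'_def E'_def UB_def)
        next
          case (Some b)
          then have b: "b \<in> A" "a \<noteq> b" using ij \<open>i = Some a\<close> by (auto simp: I_def)
          then have "f a \<noteq> f b" using finj a unfolding inj_on_def by blast
          then show ?thesis using Kdisj[OF fAP[OF a] fAP[OF b(1)]] Some \<open>i = Some a\<close> by (simp add: Q'_def)
        qed
      qed
      have cP': "topspace X = (\<Union>i\<in>I. P' i)"
        using KX AP by (auto simp: I_def P'_def E_def UA_def)
      have cQ': "topspace X = (\<Union>i\<in>I. Q' i)"
        using KX fAP fAB by (auto simp: I_def Q'_def E'_def UB_def)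
      have hm': "homeomorphic_maps (subtopology X (P' i)) (subtopology X (Q' i)) (h' i) (k' i)" if "i \<in> I" for i
      proof (cases i)
        case None then show ?thesis using gg by (simp add: P'_def Q'_def h'_def k'_def)
      next
        case (Some a)
        then have "a \<in> A" using that by (auto simp: I_def)
        then show ?thesis using hk Some by (simp add: P'_def Q'_def h'_def k'_def)
      qed
      have HM: "homeomorphic_maps X X (\<lambda>x. h' (THE i. i \<in> I \<and> x \<in> P' i) x) (\<lambda>y. k' (THE i. i \<in> I \<and> y \<in> Q' i) y)"
        by (rule glue_homeo[OF oP' dP' cP' oQ' dQ' cQ' hm'])
      have val: "h' (THE i. i \<in> I \<and> a \<in> P' i) a = f a" if a: "a \<in> A" for a
      proof -
        have "(THE i. i \<in> I \<and> a \<in> P' i) = Some a"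
        proof (rule the_equality)
          show "Some a \<in> I \<and> a \<in> P' (Some a)" using a Kp[OF AP[OF a]] by (simp add: I_def P'_def)
        next
          fix i assume i: "i \<in> I \<and> a \<in> P' i"
          show "i = Some a"
          proof (rule ccontr)
            assume "i \<noteq> Some a"
            then have "P' i \<inter> P' (Some a) = {}" using dP'[of i "Some a"] i a by (simp add: I_def)
            then show False using i Kp[OF AP[OF a]] by (auto simp: P'_def)
          qed
        qed
        then show ?thesis using hk a by (simp add: h'_def)
      qed
      show ?thesis
        using HM val unfolding homeomorphic_map_maps by blast
    qed
  qed
qed

end
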